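(* Let $|\psi\rangle,|\phi\rangle,|e\rangle,|f\rangle$ be unit vectors in $\mathbb{C}^2$ and let $\mathcal{C}$ be the set of all quantum channels on $\mathcal{L}(\mathbb{C}^2)$. Then $$\max_{\Psi\in\mathcal{C}}\left\{\frac12\langle e|\Psi(|\psi\rangle\langle\psi|)|e\rangle+\frac12\langle f|\Psi(|\phi\rangle\langle\phi|)|f\rangle\right\}\le\frac12\left(1+\sqrt{|\langle e|f\rangle|^2+\left(|\langle\psi|\phi\rangle||\langle e|f\rangle|+\sqrt{(1-|\langle\psi|\phi\rangle|^2)(1-|\langle e|f\rangle|^2)}\right)^2}\right).$$
   Context: A quantum channel is a linear, completely positive, trace preserving map on $\mathcal{L}(\mathbb{C}^2)$. *)

theory Defs
  imports "Jordan_Normal_Form.Matrix"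
begin

definition qform :: "complex mat \<Rightarrow> complex vec \<Rightarrow> complex" where
  "qform A v = (\<Sum>i<dim_vec v. \<Sum>j<dim_vec v. cnj (v $ i) * A $$ (i, j) * v $ j)"

definition psd :: "nat \<Rightarrow> complex mat \<Rightarrow> bool" where
  "psd m A \<longleftrightarrow> A \<in> carrier_mat m m \<and>
     (\<forall>v \<in> carrier_vec m. Im (qform A v) = 0 \<and> Re (qform A v) \<ge> 0)"

definition trace2 :: "complex mat \<Rightarrow> complex" where
  "trace2 A = A $$ (0,0) + A $$ (1,1)"

definition linear_map2 :: "(complex mat \<Rightarrow> complex mat) \<Rightarrow> bool" where
  "linear_map2 \<Psi> \<longleftrightarrow>
     (\<forall>A \<in> carrier_mat 2 2. \<Psi> A \<in> carrier_mat 2 2) \<and>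
     (\<forall>A \<in> carrier_mat 2 2. \<forall>B \<in> carrier_mat 2 2. \<Psi> (A + B) = \<Psi> A + \<Psi> B) \<and>
     (\<forall>A \<in> carrier_mat 2 2. \<forall>c::complex. \<Psi> (c \<cdot>\<^sub>m A) = c \<cdot>\<^sub>m \<Psi> A)"

text \<open>The map id_n \<otimes> \<Psi> on L(C^n \<otimes> C^2), with index (a,b) \<mapsto> 2a+b.\<close>
definition ampl :: "nat \<Rightarrow> (complex mat \<Rightarrow> complex mat) \<Rightarrow> complex mat \<Rightarrow> complex mat" where
  "ampl n \<Psi> X = mat (2*n) (2*n) (\<lambda>(i,j).
      \<Psi> (mat 2 2 (\<lambda>(b,b'). X $$ (2*(i div 2) + b, 2*(j div 2) + b'))) $$ (i mod 2, j mod 2))"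

definition completely_positive2 :: "(complex mat \<Rightarrow> complex mat) \<Rightarrow> bool" where
  "completely_positive2 \<Psi> \<longleftrightarrow>
     (\<forall>n::nat. \<forall>X. psd (2*n) X \<longrightarrow> psd (2*n) (ampl n \<Psi> X))"

definition trace_preserving2 :: "(complex mat \<Rightarrow> complex mat) \<Rightarrow> bool" where
  "trace_preserving2 \<Psi> \<longleftrightarrow> (\<forall>A \<in> carrier_mat 2 2. trace2 (\<Psi> A) = trace2 A)"

definition quantum_channel2 :: "(complex mat \<Rightarrow> complex mat) \<Rightarrow> bool" where
  "quantum_channel2 \<Psi> \<longleftrightarrow> linear_map2 \<Psi> \<and> completely_positive2 \<Psi> \<and> trace_preserving2 \<Psi>"

definition channels2 :: "(complex mat \<Rightarrow> complex mat) set" where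
  "channels2 = {\<Psi>. quantum_channel2 \<Psi>}"

definition braket :: "complex vec \<Rightarrow> complex vec \<Rightarrow> complex" where
  "braket u v = (\<Sum>i<dim_vec v. cnj (u $ i) * v $ i)"

definition unit_vec2 :: "complex vec \<Rightarrow> bool" where
  "unit_vec2 v \<longleftrightarrow> v \<in> carrier_vec 2 \<and> braket v v = 1"

definition ketbra :: "complex vec \<Rightarrow> complex mat" where
  "ketbra v = mat (dim_vec v) (dim_vec v) (\<lambda>(i,j). v $ i * cnj (v $ j))"

definition expval :: "complex vec \<Rightarrow> complex mat \<Rightarrow> complex" where
  "expval e M = qform M e"

end

theory Submission
  imports Defs
begin


lemma cs3: fixes x1 x2 x3 y1 y2 y3 :: real
  shows "x1*y1+x2*y2+x3*y3 \<le> sqrt(x1^2+x2^2+x3^2) * sqrt(y1^2+y2^2+y3^2)"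
proof -
  have "(x1*y1+x2*y2+x3*y3)^2 \<le> (x1^2+x2^2+x3^2) * (y1^2+y2^2+y3^2)"
  proof -
    have "(x1^2+x2^2+x3^2) * (y1^2+y2^2+y3^2) - (x1*y1+x2*y2+x3*y3)^2 = (x1*y2-x2*y1)^2 + (x1*y3-x3*y1)^2 + (x2*y3-x3*y2)^2"
      by (simp add: power2_eq_square algebra_simps)
    moreover have "(x1*y2-x2*y1)^2 + (x1*y3-x3*y1)^2 + (x2*y3-x3*y2)^2 \<ge> 0" by simp
    ultimately show ?thesis by linarith
  qed
  hence "\<bar>x1*y1+x2*y2+x3*y3\<bar> \<le> sqrt ((x1^2+x2^2+x3^2) * (y1^2+y2^2+y3^2))"
    by (intro real_le_rsqrt) simp
  thus ?thesis by (simp add: real_sqrt_mult)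
qed

lemma rl1: fixes A B k :: real
  assumes "0 \<le> A" "A \<le> 1" "0 \<le> B" "B \<le> 1" "0 \<le> k" "k \<le> sqrt (A*B) + sqrt ((1-A)*(1-B))"
  shows "(A - B)^2 \<le> 1 - k^2"
proof -
  define sa where "sa = sqrt A"
  define sa' where "sa' = sqrt (1-A)"
  define sb where "sb = sqrt B"
  define sb' where "sb' = sqrt (1-B)"
  have a: "sa^2 = A" "sa'^2 = 1 - A" "sb^2 = B" "sb'^2 = 1 - B" using assms(1-4) by (simp_all add: assms sa_def sa'_def sb_def sb'_def)
  have nn: "sa \<ge> 0" "sa' \<ge> 0" "sb \<ge> 0" "sb' \<ge> 0" by (simp_all add: assms sa_def sa'_def sb_def sb'_def)
  have k: "k \<le> sa*sb + sa'*sb'" using assms(6) by (simp add: sa_def sa'_def sb_def sb'_def real_sqrt_mult)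
  have "k^2 \<le> (sa*sb + sa'*sb')^2" using k assms(5) by (simp add: power_mono)
  moreover have "1 - (sa*sb + sa'*sb')^2 - (A - B)^2 = (sa*sa' - sb*sb')^2"
  proof -
    have e1: "sa^2 + sa'^2 = 1" and e2: "sb^2 + sb'^2 = 1" using a by simp_all
    have s1: "sa'^2 = 1 - sa^2" and s2: "sb'^2 = 1 - sb^2" using e1 e2 by simp_all
    have x1: "(sa*sb + sa'*sb')^2 = sa^2*sb^2 + sa'^2*sb'^2 + 2*(sa*sb*sa'*sb')"
      by (simp add: power2_eq_square algebra_simps)
    have x2: "(sa*sa' - sb*sb')^2 = sa^2*sa'^2 + sb^2*sb'^2 - 2*(sa*sb*sa'*sb')"
      by (simp add: power2_eq_square algebra_simps)
    have "1 - (sa*sb + sa'*sb')^2 - (sa^2 - sb^2)^2 = (sa*sa' - sb*sb')^2"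
      unfolding x1 x2 s1 s2 by (simp add: power2_eq_square algebra_simps)
    thus ?thesis using a by simp
  qed
  moreover have "(sa*sa' - sb*sb')^2 \<ge> 0" by simp
  ultimately show ?thesis by linarith
qed

lemma fin: fixes a b X Y :: real
  assumes "0 \<le> a" "a \<le> 1" "0 \<le> b" "b \<le> 1" "0 \<le> X" "0 \<le> Y" "X^2 + Y^2 \<le> 1" "Y \<le> sqrt (1 - a^2)"
  shows "b*X + sqrt (1-b^2)*Y \<le> sqrt (b^2 + (a*b + sqrt ((1-a^2)*(1-b^2)))^2)"
proof -
  define s where "s = sqrt (1-b^2)"
  define y0 where "y0 = sqrt (1-a^2)"
  have hb: "b^2 \<le> 1" by (rule power_le_one) (simp_all add: assms)
  have ha: "a^2 \<le> 1" by (rule power_le_one) (simp_all add: assms)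
  have s2: "s^2 = 1 - b^2" unfolding s_def by (rule real_sqrt_pow2) (use hb in linarith)
  have y2: "y0^2 = 1 - a^2" unfolding y0_def by (rule real_sqrt_pow2) (use ha in linarith)
  have s0: "s \<ge> 0" and y00: "y0 \<ge> 0" by (simp_all add: s_def y0_def ha hb)
  have "s^2 \<le> 1^2" using s2 by simp
  hence s1: "s \<le> 1" by (rule power2_le_imp_le) simp
  have "y0^2 \<le> 1^2" using y2 by simp
  hence y1: "y0 \<le> 1" by (rule power2_le_imp_le) simp
  have sq: "sqrt ((1-a^2)*(1-b^2)) = y0 * s" by (simp add: s_def y0_def real_sqrt_mult)
  have cs: "b*X + s*Y \<le> 1"
  proof -
    have "b*X + s*Y + 0*0 \<le> sqrt(b^2+s^2+0^2) * sqrt(X^2+Y^2+0^2)" by (rule cs3)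
    also have "\<dots> \<le> 1" using s2 assms by (simp add: real_sqrt_le_1_iff)
    finally show ?thesis by simp
  qed
  show ?thesis
  proof (cases "a \<le> b")
    case True
    have "s*(1-y0) \<le> a^2"
    proof -
      have e: "(1 - y0)*(1+y0) = a^2" using y2 by (simp add: algebra_simps power2_eq_square)
      have m1: "s \<le> 1 + y0" using s1 y00 by linarith
      have m2: "1 - y0 \<ge> 0" using y1 by linarith
      have "s*(1-y0) \<le> (1+y0)*(1-y0)" using mult_right_mono[OF m1 m2] .
      thus ?thesis using e by (simp add: mult.commute)
    qed
    also have "a^2 \<le> a*b" using True assms by (simp add: power2_eq_square mult_left_mono)
    finally have "s \<le> a*b + y0*s" by (simp add: algebra_simps)
    hence "s^2 \<le> (a*b + y0*s)^2" using s0 by (simp add: power_mono)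
    hence "1 \<le> b^2 + (a*b + y0*s)^2" using s2 by simp
    hence "1 \<le> sqrt (b^2 + (a*b + y0*s)^2)" by simp
    hence "b*X + s*Y \<le> sqrt (b^2 + (a*b + y0*s)^2)" using cs by linarith
    thus ?thesis unfolding sq s_def[symmetric] .
  next
    case False
    hence a0: "a > 0" using assms by simp
    have "a*X + y0*Y \<le> 1"
    proof -
      have "a*X + y0*Y + 0*0 \<le> sqrt(a^2+y0^2+0^2) * sqrt(X^2+Y^2+0^2)" by (rule cs3)
      also have "\<dots> \<le> 1" using y2 assms by (simp add: real_sqrt_le_1_iff)
      finally show ?thesis by simp
    qed
    have mu: "b*y0 \<le> a*s"
    proof -
      have "b^2 \<le> a^2" using False assms by (intro power_mono) simp_all
      hence "b^2 * (1 - a^2) \<le> a^2 * (1 - b^2)" by (simp add: algebra_simps)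
      hence "(b*y0)^2 \<le> (a*s)^2" using y2 s2 by (simp add: power_mult_distrib)
      thus ?thesis by (rule power2_le_imp_le) (use s0 a0 in simp)
    qed
    have "b*X + s*Y = (b/a)*(a*X + y0*Y) + (s - b*y0/a)*Y" using a0 by (simp add: field_simps)
    also have "\<dots> \<le> (b/a)*1 + (s - b*y0/a)*y0"
    proof (rule add_mono)
      show "(b/a)*(a*X + y0*Y) \<le> (b/a)*1" using \<open>a*X + y0*Y \<le> 1\<close> assms a0 by (intro mult_left_mono) simp_all
      have "s - b*y0/a \<ge> 0" using mu a0 by (simp add: field_simps)
      thus "(s - b*y0/a)*Y \<le> (s - b*y0/a)*y0" using assms y0_def by (simp add: mult_left_mono)
    qed
    also have "\<dots> = a*b + y0*s"
    proof -
      have "b = b * (a^2 + y0^2)" using y2 by simp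
      hence "(b/a)*1 = (b/a)*(a^2 + y0^2)" by simp
      also have "\<dots> = a*b + b*y0^2/a" using a0 by (simp add: field_simps power2_eq_square)
      finally show ?thesis using a0 by (simp add: field_simps power2_eq_square)
    qed
    also have "\<dots> \<le> sqrt (b^2 + (a*b + y0*s)^2)" by (simp add: real_le_rsqrt)
    finally show ?thesis unfolding sq s_def[symmetric] .
  qed
qed



definition sf :: "(nat \<Rightarrow> nat \<Rightarrow> complex) \<Rightarrow> (nat \<Rightarrow> complex) \<Rightarrow> (nat \<Rightarrow> complex) \<Rightarrow> complex" where
  "sf G u w = (\<Sum>i<4. \<Sum>j<4. cnj (u i) * G i j * w j)"

lemma sf_lin1: "sf G (\<lambda>i. x * u i + y * v i) w = cnj x * sf G u w + cnj y * sf G v w"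
  by (simp add: sf_def sum.distrib sum_distrib_left algebra_simps)

lemma sf_lin2: "sf G u (\<lambda>i. x * v i + y * w i) = x * sf G u v + y * sf G u w"
  by (simp add: sf_def sum.distrib sum_distrib_left algebra_simps)

definition topv :: "complex \<Rightarrow> complex \<Rightarrow> nat \<Rightarrow> complex" where
  "topv a b = (\<lambda>i. if i = 0 then a else if i = 1 then b else 0)"
definition botv :: "complex \<Rightarrow> complex \<Rightarrow> nat \<Rightarrow> complex" where
  "botv a b = (\<lambda>i. if i = 2 then a else if i = 3 then b else 0)"

lemma sum4: "(\<Sum>i<(4::nat). h i) = h 0 + h 1 + h 2 + (h 3 :: complex)"
  by (simp add: eval_nat_numeral)

lemma sf_tt: "sf G (topv a0 a1) (topv b0 b1) = cnj a0 * G 0 0 * b0 + cnj a0 * G 0 1 * b1 + cnj a1 * G 1 0 * b0 + cnj a1 * G 1 1 * b1"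
  by (simp add: sf_def sum4 topv_def)
lemma sf_tb: "sf G (topv a0 a1) (botv b0 b1) = cnj a0 * G 0 2 * b0 + cnj a0 * G 0 3 * b1 + cnj a1 * G 1 2 * b0 + cnj a1 * G 1 3 * b1"
  by (simp add: sf_def sum4 topv_def botv_def)
lemma sf_bb: "sf G (botv a0 a1) (botv b0 b1) = cnj a0 * G 2 2 * b0 + cnj a0 * G 2 3 * b1 + cnj a1 * G 3 2 * b0 + cnj a1 * G 3 3 * b1"
  by (simp add: sf_def sum4 botv_def)

definition psdf :: "(nat \<Rightarrow> nat \<Rightarrow> complex) \<Rightarrow> bool" where
  "psdf G \<longleftrightarrow> (\<forall>u. Im (sf G u u) = 0 \<and> Re (sf G u u) \<ge> 0)"

lemma sf_expand: "sf G (\<lambda>i. x * u i + y * w i) (\<lambda>i. x * u i + y * w i) =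
   cnj x * x * sf G u u + cnj x * y * sf G u w + cnj y * x * sf G w u + cnj y * y * sf G w w"
  by (simp add: sf_lin1 sf_lin2 algebra_simps)

lemma herm:
  assumes "psdf G" shows "sf G w u = cnj (sf G u w)"
proof -
  have h: "\<And>x y. Im (cnj x * x * sf G u u + cnj x * y * sf G u w + cnj y * x * sf G w u + cnj y * y * sf G w w) = 0"
    using assms unfolding psdf_def by (metis sf_expand)
  have uu: "Im (sf G u u) = 0" and ww: "Im (sf G w w) = 0" using assms unfolding psdf_def by auto
  have 1: "Im (sf G u w + sf G w u) = 0" using h[of 1 1] uu ww by simp
  have 2: "Re (sf G u w - sf G w u) = 0" using h[of 1 "\<i>"] uu ww by simp
  show ?thesis using 1 2 by (simp add: complex_eq_iff)
qed

lemma cs: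
  assumes "psdf G" shows "(cmod (sf G u w))^2 \<le> Re (sf G u u) * Re (sf G w w)"
proof -
  define A where "A = Re (sf G u u)"
  define D where "D = Re (sf G w w)"
  define B where "B = sf G u w"
  have uu: "sf G u u = of_real A" using assms unfolding psdf_def A_def by (simp add: complex_eq_iff)
  have ww: "sf G w w = of_real D" using assms unfolding psdf_def D_def by (simp add: complex_eq_iff)
  have wu: "sf G w u = cnj B" unfolding B_def by (rule herm[OF assms])
  have A0: "A \<ge> 0" using assms unfolding psdf_def A_def by auto
  have D0: "D \<ge> 0" using assms unfolding psdf_def D_def by auto
  have q: "0 \<le> Re (cnj x * x * of_real A + cnj x * y * B + cnj y * x * cnj B + cnj y * y * of_real D)" for x y
  proof -
    have "0 \<le> Re (sf G (\<lambda>i. x * u i + y * w i) (\<lambda>i. x * u i + y * w i))"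
      using assms unfolding psdf_def by blast
    thus ?thesis unfolding sf_expand uu ww wu B_def .
  qed
  have BB: "B * cnj B = of_real ((cmod B)^2)" by (rule complex_norm_square[symmetric])
  show ?thesis
  proof (cases "D > 0")
    case True
    have "0 \<le> Re (cnj (of_real D) * of_real D * of_real A + cnj (of_real D) * (- cnj B) * B + cnj (- cnj B) * of_real D * cnj B + cnj (- cnj B) * (- cnj B) * of_real D)"
      by (rule q)
    also have "cnj (of_real D) * of_real D * of_real A + cnj (of_real D) * (- cnj B) * B + cnj (- cnj B) * of_real D * cnj B + cnj (- cnj B) * (- cnj B) * of_real D
       = of_real D * (of_real D * of_real A - B * cnj B)"
      by (simp add: algebra_simps)
    finally have "0 \<le> D * (D * A - (cmod B)^2)" unfolding BB by simp
    hence "(cmod B)^2 \<le> D * A" using True by (simp add: zero_le_mult_iff)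
    thus ?thesis by (simp add: A_def D_def B_def mult.commute)
  next
    case False
    hence D: "D = 0" using D0 by simp
    show ?thesis
    proof (rule ccontr)
      assume "\<not> ?thesis"
      hence Bp: "(cmod B)^2 > 0" using D by (simp add: A_def D_def B_def)
      define t where "t = (A + 1) / (cmod B)^2"
      have "0 \<le> Re (cnj 1 * 1 * of_real A + cnj 1 * (- of_real t * cnj B) * B + cnj (- of_real t * cnj B) * 1 * cnj B + cnj (- of_real t * cnj B) * (- of_real t * cnj B) * of_real D)"
        by (rule q)
      also have "cnj 1 * 1 * of_real A + cnj 1 * (- of_real t * cnj B) * B + cnj (- of_real t * cnj B) * 1 * cnj B + cnj (- of_real t * cnj B) * (- of_real t * cnj B) * of_real D
         = of_real A - 2 * of_real t * (B * cnj B)" using D by (simp add: algebra_simps)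
      finally have h0: "0 \<le> A - 2 * t * (cmod B)^2" unfolding BB by simp
      have "t * (cmod B)^2 = A + 1" using Bp by (simp add: t_def)
      thus False using A0 h0 by simp
    qed
  qed
qed



definition nx :: "complex \<Rightarrow> complex \<Rightarrow> real" where "nx a b = 2 * Re (cnj a * b)"
definition ny :: "complex \<Rightarrow> complex \<Rightarrow> real" where "ny a b = 2 * Im (cnj a * b)"
definition nz :: "complex \<Rightarrow> complex \<Rightarrow> real" where "nz a b = (cmod a)^2 - (cmod b)^2"

lemma unit_c: assumes "(cmod a)^2 + (cmod b)^2 = 1" shows "a * cnj a + b * cnj b = 1"
proof -
  have "a * cnj a + b * cnj b = of_real ((cmod a)^2) + of_real ((cmod b)^2)" by (simp only: complex_norm_square)
  also have "\<dots> = of_real ((cmod a)^2 + (cmod b)^2)" by (simp only: of_real_add)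
  finally show ?thesis using assms by simp
qed

lemma n_unit: assumes "(cmod a)^2 + (cmod b)^2 = 1" shows "(nx a b)^2 + (ny a b)^2 + (nz a b)^2 = 1"
proof -
  have "(nx a b)^2 + (ny a b)^2 = 4 * ((Re (cnj a * b))^2 + (Im (cnj a * b))^2)" unfolding nx_def ny_def by (simp only: power_mult_distrib) simp
  also have "\<dots> = 4 * (cmod (cnj a * b))^2" by (simp only: cmod_power2)
  also have "\<dots> = 4 * (cmod a)^2 * (cmod b)^2" by (simp add: norm_mult power_mult_distrib)
  finally have "(nx a b)^2 + (ny a b)^2 + (nz a b)^2 = ((cmod a)^2 + (cmod b)^2)^2" by (simp add: nz_def power2_eq_square algebra_simps)
  thus ?thesis using assms by simp
qed

lemma n_dot: assumes "(cmod a)^2 + (cmod b)^2 = 1" "(cmod c)^2 + (cmod d)^2 = 1"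
  shows "nx a b * nx c d + ny a b * ny c d + nz a b * nz c d = 2 * (cmod (cnj a * c + cnj b * d))^2 - 1"
proof -
  have h1: "(Re a)^2 + (Im a)^2 + (Re b)^2 + (Im b)^2 = 1" using assms(1) by (simp add: cmod_power2)
  have h2: "(Re c)^2 + (Im c)^2 + (Re d)^2 + (Im d)^2 = 1" using assms(2) by (simp add: cmod_power2)
  have "nx a b * nx c d + ny a b * ny c d + nz a b * nz c d = 2 * (cmod (cnj a * c + cnj b * d))^2 - ((cmod a)^2 + (cmod b)^2) * ((cmod c)^2 + (cmod d)^2)"
    unfolding nx_def ny_def nz_def cmod_power2 by (simp add: power2_eq_square algebra_simps)
  thus ?thesis using assms by simp
qed

lemma n_exists: fixes m1 m2 m3 :: real assumes "m1^2 + m2^2 + m3^2 = 1"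
  shows "\<exists>a b. (cmod a)^2 + (cmod b)^2 = 1 \<and> nx a b = m1 \<and> ny a b = m2 \<and> nz a b = m3"
proof (cases "m3 = -1")
  case True
  hence "m1^2 + m2^2 = 0" using assms by simp
  hence "m1 = 0" "m2 = 0" by (simp_all add: sum_power2_eq_zero_iff)
  thus ?thesis using True by (intro exI[of _ 0] exI[of _ 1]) (simp add: nx_def ny_def nz_def)
next
  case False
  have "m3^2 \<le> 1" using assms by (smt (verit) zero_le_power2)
  hence "\<bar>m3\<bar> \<le> 1" by (simp add: abs_square_le_1)
  hence m3: "m3 > -1" using False by linarith
  define c where "c = sqrt ((1 + m3)/2)"
  have c0: "c > 0" using m3 by (simp add: c_def)
  have c2: "c^2 = (1+m3)/2" using m3 by (simp add: c_def)
  define b where "b = Complex (m1/(2*c)) (m2/(2*c))"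
  have cb: "cnj (complex_of_real c) * b = Complex (m1/2) (m2/2)" using c0 by (simp add: b_def complex_eq_iff)
  have nx1: "nx (complex_of_real c) b = m1" unfolding nx_def cb by simp
  have ny1: "ny (complex_of_real c) b = m2" unfolding ny_def cb by simp
  have "(cmod b)^2 = (m1^2 + m2^2) / (4*c^2)" by (simp add: b_def cmod_power2 power_divide power_mult_distrib add_divide_distrib)
  also have "\<dots> = (1 - m3^2) / (2*(1+m3))"
  proof -
    have e1: "m1^2 + m2^2 = 1 - m3^2" using assms by simp
    have e2: "4*c^2 = 2*(1+m3)" using c2 by simp
    show ?thesis unfolding e1 e2 ..
  qed
  also have "\<dots> = (1 - m3)/2" using m3 by (simp add: field_simps power2_eq_square)
  finally have b2: "(cmod b)^2 = (1 - m3)/2" .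
  have a2: "(cmod (complex_of_real c))^2 = (1+m3)/2" using c2 by simp
  have u: "(cmod (complex_of_real c))^2 + (cmod b)^2 = 1" unfolding a2 b2 by (simp add: add_divide_distrib[symmetric])
  have nz1: "nz (complex_of_real c) b = m3" unfolding nz_def a2 b2 by (simp add: diff_divide_distrib[symmetric])
  show ?thesis using u nx1 ny1 nz1 by blast
qed



definition rx1 :: "(nat \<Rightarrow> nat \<Rightarrow> complex) \<Rightarrow> real" where "rx1 G = 2 * Re (G 0 1)"
definition ry1 :: "(nat \<Rightarrow> nat \<Rightarrow> complex) \<Rightarrow> real" where "ry1 G = - 2 * Im (G 0 1)"
definition rz1 :: "(nat \<Rightarrow> nat \<Rightarrow> complex) \<Rightarrow> real" where "rz1 G = Re (G 0 0) - Re (G 1 1)"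
definition rx2 :: "(nat \<Rightarrow> nat \<Rightarrow> complex) \<Rightarrow> real" where "rx2 G = 2 * Re (G 2 3)"
definition ry2 :: "(nat \<Rightarrow> nat \<Rightarrow> complex) \<Rightarrow> real" where "ry2 G = - 2 * Im (G 2 3)"
definition rz2 :: "(nat \<Rightarrow> nat \<Rightarrow> complex) \<Rightarrow> real" where "rz2 G = Re (G 2 2) - Re (G 3 3)"

lemma pq_lemma: fixes p q x y :: real assumes "p + q = 1" "x + y = 1"
  shows "p * x + q * y = 1/2 + (p - q) * (x - y) / 2"
proof -
  have q: "q = 1 - p" and y: "y = 1 - x" using assms by simp_all
  have "2 * (p * x + q * y) = 1 + (p - q) * (x - y)" unfolding q y by (simp add: algebra_simps)
  thus ?thesis by (simp add: field_simps)
qed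

context
  fixes G :: "nat \<Rightarrow> nat \<Rightarrow> complex" and \<kappa> :: complex
  assumes P: "psdf G" and t1: "G 0 0 + G 1 1 = 1" and t2: "G 2 2 + G 3 3 = 1"
    and tk: "G 0 2 + G 1 3 = \<kappa>"
begin

lemma onb1: assumes "(cmod a)^2 + (cmod b)^2 = 1"
  shows "sf G (topv a b) (topv a b) + sf G (topv (- cnj b) (cnj a)) (topv (- cnj b) (cnj a)) = 1"
proof -
  have "sf G (topv a b) (topv a b) + sf G (topv (- cnj b) (cnj a)) (topv (- cnj b) (cnj a)) = (a * cnj a + b * cnj b) * (G 0 0 + G 1 1)"
    by (simp add: sf_tt algebra_simps)
  thus ?thesis using unit_c[OF assms] t1 by simp
qed

lemma onb2: assumes "(cmod a)^2 + (cmod b)^2 = 1"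
  shows "sf G (botv a b) (botv a b) + sf G (botv (- cnj b) (cnj a)) (botv (- cnj b) (cnj a)) = 1"
proof -
  have "sf G (botv a b) (botv a b) + sf G (botv (- cnj b) (cnj a)) (botv (- cnj b) (cnj a)) = (a * cnj a + b * cnj b) * (G 2 2 + G 3 3)"
    by (simp add: sf_bb algebra_simps)
  thus ?thesis using unit_c[OF assms] t2 by simp
qed

lemma onbk: assumes "(cmod a)^2 + (cmod b)^2 = 1"
  shows "sf G (topv a b) (botv a b) + sf G (topv (- cnj b) (cnj a)) (botv (- cnj b) (cnj a)) = \<kappa>"
proof -
  have "sf G (topv a b) (botv a b) + sf G (topv (- cnj b) (cnj a)) (botv (- cnj b) (cnj a)) = (a * cnj a + b * cnj b) * (G 0 2 + G 1 3)"
    by (simp add: sf_tb algebra_simps)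
  thus ?thesis using unit_c[OF assms] tk by simp
qed

lemma nonneg: "0 \<le> Re (sf G u u)" using P unfolding psdf_def by auto

lemma cs_sqrt: "cmod (sf G u w) \<le> sqrt (Re (sf G u u) * Re (sf G w w))"
  using cs[OF P, of u w] by (intro real_le_rsqrt) simp

lemma td: assumes "(cmod a)^2 + (cmod b)^2 = 1"
  shows "Re (sf G (topv a b) (topv a b)) - Re (sf G (botv a b) (botv a b)) \<le> sqrt (1 - (cmod \<kappa>)^2)
     \<and> cmod \<kappa> \<le> 1"
proof -
  define A where "A = Re (sf G (topv a b) (topv a b))"
  define A' where "A' = Re (sf G (topv (- cnj b) (cnj a)) (topv (- cnj b) (cnj a)))"
  define B where "B = Re (sf G (botv a b) (botv a b))"
  define B' where "B' = Re (sf G (botv (- cnj b) (cnj a)) (botv (- cnj b) (cnj a)))"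
  define C where "C = sf G (topv a b) (botv a b)"
  define C' where "C' = sf G (topv (- cnj b) (cnj a)) (botv (- cnj b) (cnj a))"
  have AA: "A + A' = 1" using arg_cong[OF onb1[OF assms], of Re] by (simp add: A_def A'_def)
  have BB: "B + B' = 1" using arg_cong[OF onb2[OF assms], of Re] by (simp add: B_def B'_def)
  have CC: "C + C' = \<kappa>" using onbk[OF assms] by (simp add: C_def C'_def)
  have n: "0 \<le> A" "0 \<le> A'" "0 \<le> B" "0 \<le> B'" by (simp_all add: A_def A'_def B_def B'_def nonneg)
  have c1: "cmod C \<le> sqrt (A * B)" unfolding C_def A_def B_def by (rule cs_sqrt)
  have c2: "cmod C' \<le> sqrt (A' * B')" unfolding C'_def A'_def B'_def by (rule cs_sqrt)
  have "cmod \<kappa> \<le> cmod C + cmod C'" unfolding CC[symmetric] by (rule norm_triangle_ineq)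
  also have "\<dots> \<le> sqrt (A * B) + sqrt ((1 - A) * (1 - B))" using c1 c2 AA BB
    by (smt (verit))
  finally have k: "cmod \<kappa> \<le> sqrt (A * B) + sqrt ((1 - A) * (1 - B))" .
  have r: "(A - B)^2 \<le> 1 - (cmod \<kappa>)^2"
    by (rule rl1) (use n AA BB k in auto)
  have "A - B \<le> sqrt ((A - B)^2)" by simp
  also have "\<dots> \<le> sqrt (1 - (cmod \<kappa>)^2)" using r by (rule real_sqrt_le_mono)
  finally have 1: "A - B \<le> sqrt (1 - (cmod \<kappa>)^2)" .
  have "(cmod \<kappa>)^2 \<le> 1" using r by (smt (verit) zero_le_power2)
  hence "cmod \<kappa> \<le> 1" by (simp add: abs_square_le_1)
  thus ?thesis using 1 by (simp add: A_def B_def)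
qed

lemma G10: "G 1 0 = cnj (G 0 1)"
  using herm[OF P, of "topv 0 1" "topv 1 0"] by (simp add: sf_tt)
lemma G32: "G 3 2 = cnj (G 2 3)"
  using herm[OF P, of "botv 0 1" "botv 1 0"] by (simp add: sf_bb)
lemma ImG: "Im (G 0 0) = 0" "Im (G 1 1) = 0" "Im (G 2 2) = 0" "Im (G 3 3) = 0"
  using P unfolding psdf_def
  by (metis sf_tt sf_bb complex_cnj_zero complex_cnj_one mult_1_left mult_1_right mult_zero_left mult_zero_right add_0 add.right_neutral)+

lemma bloch_top: assumes "(cmod a)^2 + (cmod b)^2 = 1"
  shows "Re (sf G (topv a b) (topv a b)) = 1/2 + (nx a b * rx1 G + ny a b * ry1 G + nz a b * rz1 G) / 2"
proof -
  have "Re (sf G (topv a b) (topv a b)) = Re (cnj a * G 0 0 * a + cnj a * G 0 1 * b + cnj b * cnj (G 0 1) * a + cnj b * G 1 1 * b)"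
    by (simp only: sf_tt G10)
  also have "\<dots> = (cmod a)^2 * Re (G 0 0) + (cmod b)^2 * Re (G 1 1) + (nx a b * rx1 G + ny a b * ry1 G) / 2"
    using ImG unfolding cmod_power2 by (simp add: nx_def ny_def rx1_def ry1_def algebra_simps power2_eq_square field_simps)
  also have "(cmod a)^2 * Re (G 0 0) + (cmod b)^2 * Re (G 1 1) = 1/2 + nz a b * rz1 G / 2"
    unfolding nz_def rz1_def by (rule pq_lemma[OF assms]) (use arg_cong[OF t1, of Re] in simp)
  finally show ?thesis by (simp add: add_divide_distrib)
qed

lemma bloch_bot: assumes "(cmod a)^2 + (cmod b)^2 = 1"
  shows "Re (sf G (botv a b) (botv a b)) = 1/2 + (nx a b * rx2 G + ny a b * ry2 G + nz a b * rz2 G) / 2"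
proof -
  have "Re (sf G (botv a b) (botv a b)) = Re (cnj a * G 2 2 * a + cnj a * G 2 3 * b + cnj b * cnj (G 2 3) * a + cnj b * G 3 3 * b)"
    by (simp only: sf_bb G32)
  also have "\<dots> = (cmod a)^2 * Re (G 2 2) + (cmod b)^2 * Re (G 3 3) + (nx a b * rx2 G + ny a b * ry2 G) / 2"
    using ImG unfolding cmod_power2 by (simp add: nx_def ny_def rx2_def ry2_def algebra_simps power2_eq_square field_simps)
  also have "(cmod a)^2 * Re (G 2 2) + (cmod b)^2 * Re (G 3 3) = 1/2 + nz a b * rz2 G / 2"
    unfolding nz_def rz2_def by (rule pq_lemma[OF assms]) (use arg_cong[OF t2, of Re] in simp)
  finally show ?thesis by (simp add: add_divide_distrib)
qed

lemma r1_norm: "(rx1 G)^2 + (ry1 G)^2 + (rz1 G)^2 \<le> 1"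
proof -
  have c: "(cmod (G 0 1))^2 \<le> Re (G 0 0) * Re (G 1 1)"
    using cs[OF P, of "topv 1 0" "topv 0 1"] by (simp add: sf_tt)
  have s: "Re (G 0 0) + Re (G 1 1) = 1" using arg_cong[OF t1, of Re] by simp
  have "(rx1 G)^2 + (ry1 G)^2 = 4 * (cmod (G 0 1))^2" by (simp add: rx1_def ry1_def cmod_power2 power_mult_distrib)
  hence "(rx1 G)^2 + (ry1 G)^2 + (rz1 G)^2 \<le> 4 * (Re (G 0 0) * Re (G 1 1)) + (Re (G 0 0) - Re (G 1 1))^2"
    using c by (simp add: rz1_def)
  also have "\<dots> = (Re (G 0 0) + Re (G 1 1))^2" by (simp add: power2_eq_square algebra_simps)
  finally show ?thesis using s by simp
qed

lemma r2_norm: "(rx2 G)^2 + (ry2 G)^2 + (rz2 G)^2 \<le> 1"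
proof -
  have c: "(cmod (G 2 3))^2 \<le> Re (G 2 2) * Re (G 3 3)"
    using cs[OF P, of "botv 1 0" "botv 0 1"] by (simp add: sf_bb)
  have s: "Re (G 2 2) + Re (G 3 3) = 1" using arg_cong[OF t2, of Re] by simp
  have "(rx2 G)^2 + (ry2 G)^2 = 4 * (cmod (G 2 3))^2" by (simp add: rx2_def ry2_def cmod_power2 power_mult_distrib)
  hence "(rx2 G)^2 + (ry2 G)^2 + (rz2 G)^2 \<le> 4 * (Re (G 2 2) * Re (G 3 3)) + (Re (G 2 2) - Re (G 3 3))^2"
    using c by (simp add: rz2_def)
  also have "\<dots> = (Re (G 2 2) + Re (G 3 3))^2" by (simp add: power2_eq_square algebra_simps)
  finally show ?thesis using s by simp
qed

lemma main_num:
  assumes ue: "(cmod e0)^2 + (cmod e1)^2 = 1" and uf: "(cmod f0)^2 + (cmod f1)^2 = 1"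
  shows "(Re (sf G (topv e0 e1) (topv e0 e1)) + Re (sf G (botv f0 f1) (botv f0 f1))) / 2
    \<le> 1/2 * (1 + sqrt ((cmod (cnj e0 * f0 + cnj e1 * f1))^2 + (cmod \<kappa> * cmod (cnj e0 * f0 + cnj e1 * f1) + sqrt ((1 - (cmod \<kappa>)^2) * (1 - (cmod (cnj e0 * f0 + cnj e1 * f1))^2)))^2))"
proof -
  define bb where "bb = cmod (cnj e0 * f0 + cnj e1 * f1)"
  define k where "k = cmod \<kappa>"
  define x1 where "x1 = rx1 G"
  define y1 where "y1 = ry1 G"
  define z1 where "z1 = rz1 G"
  define x2 where "x2 = rx2 G"
  define y2 where "y2 = ry2 G"
  define z2 where "z2 = rz2 G"
  define ax where "ax = nx e0 e1"
  define ay where "ay = ny e0 e1"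
  define az where "az = nz e0 e1"
  define bx where "bx = nx f0 f1"
  define by' where "by' = ny f0 f1"
  define bz where "bz = nz f0 f1"
  have E: "Re (sf G (topv e0 e1) (topv e0 e1)) = 1/2 + (ax*x1 + ay*y1 + az*z1)/2"
    using bloch_top[OF ue] by (simp add: ax_def ay_def az_def x1_def y1_def z1_def)
  have F: "Re (sf G (botv f0 f1) (botv f0 f1)) = 1/2 + (bx*x2 + by'*y2 + bz*z2)/2"
    using bloch_bot[OF uf] by (simp add: bx_def by'_def bz_def x2_def y2_def z2_def)
  have dot: "ax*bx + ay*by' + az*bz = 2*bb^2 - 1"
    using n_dot[OF ue uf] by (simp add: ax_def ay_def az_def bx_def by'_def bz_def bb_def)
  have nu1: "ax^2 + ay^2 + az^2 = 1" using n_unit[OF ue] by (simp add: ax_def ay_def az_def)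
  have nu2: "bx^2 + by'^2 + bz^2 = 1" using n_unit[OF uf] by (simp add: bx_def by'_def bz_def)
  have r1: "x1^2 + y1^2 + z1^2 \<le> 1" using r1_norm by (simp add: x1_def y1_def z1_def)
  have r2: "x2^2 + y2^2 + z2^2 \<le> 1" using r2_norm by (simp add: x2_def y2_def z2_def)
  have bb0: "0 \<le> bb" by (simp add: bb_def)
  have "ax*bx + ay*by' + az*bz \<le> sqrt (ax^2 + ay^2 + az^2) * sqrt (bx^2 + by'^2 + bz^2)" by (rule cs3)
  hence "2*bb^2 - 1 \<le> 1" using nu1 nu2 dot by simp
  hence "bb^2 \<le> 1" by simp
  hence bb1: "bb \<le> 1" using bb0 by (simp add: abs_square_le_1)
  have k01: "0 \<le> k" "k \<le> 1" using td[OF ue] by (simp_all add: k_def)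
  define Sp where "Sp = (x1+x2)^2 + (y1+y2)^2 + (z1+z2)^2"
  define Sm where "Sm = (x1-x2)^2 + (y1-y2)^2 + (z1-z2)^2"
  define X where "X = sqrt Sp / 2"
  define Y where "Y = sqrt Sm / 2"
  have Sp0: "Sp \<ge> 0" and Sm0: "Sm \<ge> 0" by (simp_all add: Sp_def Sm_def)
  have X0: "X \<ge> 0" and Y0: "Y \<ge> 0" using Sp0 Sm0 by (simp_all add: X_def Y_def)
  have "X^2 + Y^2 = (Sp + Sm) / 4" using Sp0 Sm0 by (simp add: X_def Y_def power_divide)
  also have "Sp + Sm = 2 * (x1^2 + y1^2 + z1^2) + 2 * (x2^2 + y2^2 + z2^2)"
    by (simp add: Sp_def Sm_def power2_eq_square algebra_simps)
  finally have XY: "X^2 + Y^2 \<le> 1" using r1 r2 by simp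
  have ip: "(ax*x1 + ay*y1 + az*z1) + (bx*x2 + by'*y2 + bz*z2)
      = (((ax+bx)*(x1+x2) + (ay+by')*(y1+y2) + (az+bz)*(z1+z2)) + ((ax-bx)*(x1-x2) + (ay-by')*(y1-y2) + (az-bz)*(z1-z2))) / 2"
    by (simp add: algebra_simps)
  have np: "sqrt ((ax+bx)^2 + (ay+by')^2 + (az+bz)^2) = 2 * bb"
  proof -
    have "(ax+bx)^2 + (ay+by')^2 + (az+bz)^2 = (ax^2+ay^2+az^2) + (bx^2+by'^2+bz^2) + 2*(ax*bx + ay*by' + az*bz)"
      by (simp add: power2_eq_square algebra_simps)
    also have "\<dots> = (2*bb)^2" using nu1 nu2 dot by (simp add: power_mult_distrib)
    finally show ?thesis using bb0 by (simp add: real_sqrt_mult)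
  qed
  have nm: "sqrt ((ax-bx)^2 + (ay-by')^2 + (az-bz)^2) = 2 * sqrt (1 - bb^2)"
  proof -
    have "(ax-bx)^2 + (ay-by')^2 + (az-bz)^2 = (ax^2+ay^2+az^2) + (bx^2+by'^2+bz^2) - 2*(ax*bx + ay*by' + az*bz)"
      by (simp add: power2_eq_square algebra_simps)
    also have "\<dots> = 4 * (1 - bb^2)" using nu1 nu2 dot by simp
    finally have h: "(ax-bx)^2 + (ay-by')^2 + (az-bz)^2 = 4 * (1 - bb^2)" .
    show ?thesis unfolding h real_sqrt_mult by simp
  qed
  have c1: "(ax+bx)*(x1+x2) + (ay+by')*(y1+y2) + (az+bz)*(z1+z2) \<le> 2 * bb * (2 * X)"
    using cs3[of "ax+bx" "x1+x2" "ay+by'" "y1+y2" "az+bz" "z1+z2"] np by (simp add: X_def Sp_def)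
  have c2: "(ax-bx)*(x1-x2) + (ay-by')*(y1-y2) + (az-bz)*(z1-z2) \<le> 2 * sqrt (1 - bb^2) * (2 * Y)"
    using cs3[of "ax-bx" "x1-x2" "ay-by'" "y1-y2" "az-bz" "z1-z2"] nm by (simp add: Y_def Sm_def)
  have Yb: "Y \<le> sqrt (1 - k^2)"
  proof (cases "Sm = 0")
    case True
    thus ?thesis using k01 by (simp add: Y_def abs_square_le_1 power_le_one)
  next
    case False
    hence Sp: "Sm > 0" using Sm0 by simp
    define D where "D = sqrt Sm"
    have D0: "D > 0" using Sp by (simp add: D_def)
    have D2: "D^2 = Sm" using Sm0 by (simp add: D_def)
    have "((x1-x2)/D)^2 + ((y1-y2)/D)^2 + ((z1-z2)/D)^2 = Sm / D^2"
      by (simp add: Sm_def power_divide add_divide_distrib)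
    also have "\<dots> = 1" using D2 Sp by simp
    finally obtain g0 g1 where ug: "(cmod g0)^2 + (cmod g1)^2 = 1"
      and g: "nx g0 g1 = (x1-x2)/D" "ny g0 g1 = (y1-y2)/D" "nz g0 g1 = (z1-z2)/D"
      using n_exists by blast
    define mx where "mx = (x1-x2)/D"
    define my where "my = (y1-y2)/D"
    define mz where "mz = (z1-z2)/D"
    have bt: "Re (sf G (topv g0 g1) (topv g0 g1)) = 1/2 + (mx * x1 + my * y1 + mz * z1) / 2"
      using bloch_top[OF ug] g by (simp add: x1_def y1_def z1_def mx_def my_def mz_def)
    have bb': "Re (sf G (botv g0 g1) (botv g0 g1)) = 1/2 + (mx * x2 + my * y2 + mz * z2) / 2"
      using bloch_bot[OF ug] g by (simp add: x2_def y2_def z2_def mx_def my_def mz_def)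
    have "Re (sf G (topv g0 g1) (topv g0 g1)) - Re (sf G (botv g0 g1) (botv g0 g1))
        = (mx * (x1 - x2) + my * (y1 - y2) + mz * (z1 - z2)) / 2"
      unfolding bt bb' by (simp add: algebra_simps diff_divide_distrib)
    also have "mx * (x1 - x2) + my * (y1 - y2) + mz * (z1 - z2) = ((x1-x2)/D * (x1 - x2) + (y1-y2)/D * (y1 - y2) + (z1-z2)/D * (z1 - z2))"
      by (simp add: mx_def my_def mz_def)
    also have "((x1-x2)/D * (x1 - x2) + (y1-y2)/D * (y1 - y2) + (z1-z2)/D * (z1 - z2)) = Sm / D" by (simp add: Sm_def power2_eq_square add_divide_distrib)
    also have "Sm / D / 2 = Y" using D2 D0 by (simp add: Y_def D_def[symmetric] power2_eq_square) (metis D0 nonzero_mult_div_cancel_left less_irrefl)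
    finally show ?thesis using td[OF ug] by (simp add: k_def)
  qed
  have fb: "bb*X + sqrt (1-bb^2)*Y \<le> sqrt (bb^2 + (k*bb + sqrt ((1-k^2)*(1-bb^2)))^2)"
    by (rule fin) (use bb0 bb1 k01 X0 Y0 XY Yb in auto)
  have "(Re (sf G (topv e0 e1) (topv e0 e1)) + Re (sf G (botv f0 f1) (botv f0 f1))) / 2
      = (1 + ((ax*x1 + ay*y1 + az*z1) + (bx*x2 + by'*y2 + bz*z2)) / 2) / 2"
    unfolding E F by (simp add: field_simps)
  also have "\<dots> \<le> (1 + (2 * bb * (2 * X) + 2 * sqrt (1 - bb^2) * (2 * Y)) / 4) / 2"
    unfolding ip using c1 c2 by (simp add: field_simps)
  also have "\<dots> = 1/2 * (1 + (bb*X + sqrt (1-bb^2)*Y))" by (simp add: field_simps)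
  also have "\<dots> \<le> 1/2 * (1 + sqrt (bb^2 + (k*bb + sqrt ((1-k^2)*(1-bb^2)))^2))"
    using fb by simp
  finally show ?thesis by (simp add: bb_def k_def)
qed

end


lemma sum2: "(\<Sum>i<(2::nat). h i) = h 0 + (h 1 :: complex)"
  by (simp add: eval_nat_numeral)

lemma unit_vec2_D: assumes "unit_vec2 v"
  shows "dim_vec v = 2" "(cmod (v$0))^2 + (cmod (v$1))^2 = 1"
proof -
  show d: "dim_vec v = 2" using assms unfolding unit_vec2_def by auto
  have "braket v v = 1" using assms unfolding unit_vec2_def by auto
  hence "cnj (v$0) * v$0 + cnj (v$1) * v$1 = 1" unfolding braket_def d sum2 .
  hence "of_real ((cmod (v$0))^2 + (cmod (v$1))^2) = (1::complex)"
    by (simp only: of_real_add complex_norm_square mult.commute)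
  thus "(cmod (v$0))^2 + (cmod (v$1))^2 = 1" using of_real_eq_1_iff by blast
qed

lemma id_channel: "(\<lambda>A. A) \<in> channels2"
proof -
  have amp: "ampl n (\<lambda>A. A) X = X" if "X \<in> carrier_mat (2*n) (2*n)" for n X
  proof (rule eq_matI)
    fix i j assume ij: "i < dim_row X" "j < dim_col X"
    have "i mod 2 < 2" "j mod 2 < 2" by simp_all
    thus "ampl n (\<lambda>A. A) X $$ (i, j) = X $$ (i, j)"
      using ij that unfolding ampl_def by simp
  qed (use that in \<open>simp_all add: ampl_def\<close>)
  show ?thesis
    unfolding channels2_def quantum_channel2_def linear_map2_def completely_positive2_def trace_preserving2_def
    using amp by (auto simp: psd_def)
qed

lemma sum4n: "(\<Sum>i<(4::nat). h i) = h 0 + h 1 + h 2 + (h 3 :: complex)"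
  by (simp add: eval_nat_numeral)

lemma channel_bound:
  fixes \<psi> \<phi> e f :: "complex vec"
  assumes "unit_vec2 \<psi>" and "unit_vec2 \<phi>" and "unit_vec2 e" and "unit_vec2 f"
    and ch: "\<Psi> \<in> channels2"
  shows "Re (1/2 * expval e (\<Psi> (ketbra \<psi>)) + 1/2 * expval f (\<Psi> (ketbra \<phi>)))
         \<le> 1/2 * (1 + sqrt ((cmod (braket e f))\<^sup>2 +
              (cmod (braket \<psi> \<phi>) * cmod (braket e f) +
               sqrt ((1 - (cmod (braket \<psi> \<phi>))\<^sup>2) * (1 - (cmod (braket e f))\<^sup>2)))\<^sup>2))"
proof -
  note dp = unit_vec2_D[OF assms(1)] and dq = unit_vec2_D[OF assms(2)]
    and de = unit_vec2_D[OF assms(3)] and df = unit_vec2_D[OF assms(4)]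
  have CP: "completely_positive2 \<Psi>" and TP: "trace_preserving2 \<Psi>"
    using ch unfolding channels2_def quantum_channel2_def by auto
  define w where "w = vec 4 (\<lambda>k. if k < 2 then \<psi>$k else \<phi>$(k-2))"
  define X where "X = ketbra w"
  have dw: "dim_vec w = 4" by (simp add: w_def)
  have psdX: "psd (2*2) X"
  proof -
    have q: "qform X v = cnj (\<Sum>j<4. cnj (w$j) * v$j) * (\<Sum>j<4. cnj (w$j) * v$j)" if "v \<in> carrier_vec 4" for v
    proof -
      have dv: "dim_vec v = 4" using that by simp
      have "qform X v = (\<Sum>i<4. \<Sum>j<4. cnj (v$i) * w$i * (cnj (w$j) * v$j))"
        unfolding qform_def X_def ketbra_def dv dw
        by (intro sum.cong refl) (simp add: dw mult.assoc)
      also have "\<dots> = (\<Sum>i<4. cnj (v$i) * w$i) * (\<Sum>j<4. cnj (w$j) * v$j)"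
        by (simp only: sum_product)
      also have "(\<Sum>i<4. cnj (v$i) * w$i) = cnj (\<Sum>j<4. cnj (w$j) * v$j)"
        by (simp add: mult.commute)
      finally show ?thesis .
    qed
    have ns: "cnj S * S = of_real ((cmod S)^2)" for S :: complex
      using complex_norm_square[of S] by (simp only: mult.commute)
    have "qform X v = of_real ((cmod (\<Sum>j<4. cnj (w$j) * v$j))^2)" if "v \<in> carrier_vec 4" for v
      by (simp only: q[OF that] ns)
    hence "\<forall>v \<in> carrier_vec 4. Im (qform X v) = 0 \<and> Re (qform X v) \<ge> 0" by simp
    moreover have "X \<in> carrier_mat 4 4" by (simp add: X_def ketbra_def dw)
    ultimately have "psd 4 X" unfolding psd_def by blast
    thus ?thesis by simp
  qed
  define H where "H = ampl 2 \<Psi> X"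
  have "psd (2*2) H" using CP psdX unfolding completely_positive2_def H_def by blast
  hence psdH: "psd 4 H" by simp
  define G where "G = (\<lambda>i j. H $$ (i, j))"
  have psdf: "psdf G" unfolding psdf_def
  proof
    fix u
    have "sf G u u = qform H (vec 4 u)"
      unfolding sf_def qform_def G_def by simp
    thus "Im (sf G u u) = 0 \<and> 0 \<le> Re (sf G u u)" using psdH unfolding psd_def by auto
  qed
  define Mx where "Mx = (\<lambda>k l. mat 2 2 (\<lambda>(b, b'). X $$ (2*k + b, 2*l + b')))"
  have Gent: "G i j = \<Psi> (Mx (i div 2) (j div 2)) $$ (i mod 2, j mod 2)" if "i < 4" "j < 4" for i j
    using that unfolding G_def H_def ampl_def Mx_def by simp
  have M00: "Mx 0 0 = ketbra \<psi>"
    by (rule eq_matI) (auto simp: Mx_def X_def ketbra_def w_def dw dp(1))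
  have M11: "Mx 1 1 = ketbra \<phi>"
    by (rule eq_matI) (auto simp: Mx_def X_def ketbra_def w_def dw dq(1))
  define Mk where "Mk = mat 2 2 (\<lambda>(b, b'). \<psi>$b * cnj (\<phi>$b'))"
  have M01: "Mx 0 1 = Mk"
    by (rule eq_matI) (auto simp: Mx_def X_def ketbra_def w_def dw Mk_def)
  define \<rho>1 where "\<rho>1 = \<Psi> (ketbra \<psi>)"
  define \<rho>2 where "\<rho>2 = \<Psi> (ketbra \<phi>)"
  define \<rho>3 where "\<rho>3 = \<Psi> Mk"
  have g1: "G 0 0 = \<rho>1 $$ (0,0)" "G 0 1 = \<rho>1 $$ (0,1)" "G 1 0 = \<rho>1 $$ (1,0)" "G 1 1 = \<rho>1 $$ (1,1)"
    using Gent[of 0 0] Gent[of 0 1] Gent[of 1 0] Gent[of 1 1] by (simp_all add: M00 \<rho>1_def)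
  have g2: "G 2 2 = \<rho>2 $$ (0,0)" "G 2 3 = \<rho>2 $$ (0,1)" "G 3 2 = \<rho>2 $$ (1,0)" "G 3 3 = \<rho>2 $$ (1,1)"
    using Gent[of 2 2] Gent[of 2 3] Gent[of 3 2] Gent[of 3 3] by (simp_all add: M11[simplified] \<rho>2_def)
  have g3: "G 0 2 = \<rho>3 $$ (0,0)" "G 1 3 = \<rho>3 $$ (1,1)"
    using Gent[of 0 2] Gent[of 1 3] by (simp_all add: M01[simplified] \<rho>3_def)
  have kc: "ketbra \<psi> \<in> carrier_mat 2 2" "ketbra \<phi> \<in> carrier_mat 2 2" "Mk \<in> carrier_mat 2 2"
    by (simp_all add: ketbra_def dp(1) dq(1) Mk_def)
  have t1: "G 0 0 + G 1 1 = 1"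
  proof -
    have "G 0 0 + G 1 1 = trace2 (ketbra \<psi>)" using TP kc unfolding trace_preserving2_def g1 \<rho>1_def trace2_def by auto
    also have "\<dots> = \<psi>$0 * cnj (\<psi>$0) + \<psi>$1 * cnj (\<psi>$1)" by (simp add: trace2_def ketbra_def dp(1))
    also have "\<dots> = 1" using unit_c[OF dp(2)] .
    finally show ?thesis .
  qed
  have t2: "G 2 2 + G 3 3 = 1"
  proof -
    have "G 2 2 + G 3 3 = trace2 (ketbra \<phi>)" using TP kc unfolding trace_preserving2_def g2 \<rho>2_def trace2_def by auto
    also have "\<dots> = \<phi>$0 * cnj (\<phi>$0) + \<phi>$1 * cnj (\<phi>$1)" by (simp add: trace2_def ketbra_def dq(1))
    also have "\<dots> = 1" using unit_c[OF dq(2)] .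
    finally show ?thesis .
  qed
  define \<kappa> where "\<kappa> = \<psi>$0 * cnj (\<phi>$0) + \<psi>$1 * cnj (\<phi>$1)"
  have tk: "G 0 2 + G 1 3 = \<kappa>"
  proof -
    have "G 0 2 + G 1 3 = trace2 Mk" using TP kc unfolding trace_preserving2_def g3 \<rho>3_def trace2_def by auto
    also have "\<dots> = \<kappa>" by (simp add: trace2_def Mk_def \<kappa>_def)
    finally show ?thesis .
  qed
  have kb: "cmod (braket \<psi> \<phi>) = cmod \<kappa>"
  proof -
    have "braket \<psi> \<phi> = cnj \<kappa>" unfolding braket_def dq(1) sum2 \<kappa>_def by simp
    thus ?thesis by simp
  qed
  have ef: "braket e f = cnj (e$0) * f$0 + cnj (e$1) * f$1" unfolding braket_def df(1) sum2 ..
  have Ee: "expval e \<rho>1 = sf G (topv (e$0) (e$1)) (topv (e$0) (e$1))"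
    unfolding expval_def qform_def de(1) sum2 sf_tt g1 by (simp add: algebra_simps)
  have Ef: "expval f \<rho>2 = sf G (botv (f$0) (f$1)) (botv (f$0) (f$1))"
    unfolding expval_def qform_def df(1) sum2 sf_bb g2 by (simp add: algebra_simps)
  have "Re (1/2 * expval e (\<Psi> (ketbra \<psi>)) + 1/2 * expval f (\<Psi> (ketbra \<phi>)))
     = (Re (sf G (topv (e$0) (e$1)) (topv (e$0) (e$1))) + Re (sf G (botv (f$0) (f$1)) (botv (f$0) (f$1)))) / 2"
    using Ee Ef unfolding \<rho>1_def \<rho>2_def by simp
  also have "\<dots> \<le> 1/2 * (1 + sqrt ((cmod (cnj (e$0) * f$0 + cnj (e$1) * f$1))^2 + (cmod \<kappa> * cmod (cnj (e$0) * f$0 + cnj (e$1) * f$1) + sqrt ((1 - (cmod \<kappa>)^2) * (1 - (cmod (cnj (e$0) * f$0 + cnj (e$1) * f$1))^2)))^2))" by (rule main_num[OF psdf t1 t2 tk de(2) df(2)])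
  finally show ?thesis unfolding kb ef .
qed


theorem corollary5:
  fixes \<psi> \<phi> e f :: "complex vec"
  assumes "unit_vec2 \<psi>" and "unit_vec2 \<phi>" and "unit_vec2 e" and "unit_vec2 f"
  shows "(SUP \<Psi>\<in>channels2.
            Re (1/2 * expval e (\<Psi> (ketbra \<psi>)) + 1/2 * expval f (\<Psi> (ketbra \<phi>))))
         \<le> 1/2 * (1 + sqrt ((cmod (braket e f))\<^sup>2 +
              (cmod (braket \<psi> \<phi>) * cmod (braket e f) +
               sqrt ((1 - (cmod (braket \<psi> \<phi>))\<^sup>2) * (1 - (cmod (braket e f))\<^sup>2)))\<^sup>2))"
  proof -
  have ne: "channels2 \<noteq> {}" using id_channel by blast
  show ?thesis
    by (rule cSUP_least[OF ne]) (rule channel_bound[OF assms])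
qed

end
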